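(* Let $G$ be a graph without isolated vertices and $T$ a solution counting decision tree for $\varphi(G)$. Let $u$ be a node of $T$ labelled by a variable $x$ that is not forced to $1$ by $A_u$. Then the weight of the outgoing edge of $u$ labelled $\neg x$ is between $(1/2)^{|N^u(x)|+1}$ and $1/2$, and the weight of the outgoing edge of $u$ labelled $x$ is between $1/2$ and $1-(1/2)^{|N^u(x)|+1}$.
   Context: $\varphi(G)$ is the CNF on variables $V(G)$ with clauses $(u\vee v)$ for $\{u,v\}\in E(G)$. Boolean functions are identified with their sets of satisfying assignments (sets of literals); $F|_S$ is the function on the remaining variables whose satisfying assignments are the $S'$ with $S\cup S'$ satisfying $F$; $|\cdot|$ counts satisfying assignments. Decision tree for $F$ (not constant false): root labelled by some $x\in Var(F)$; for each literal $\ell\in\{x,\neg x\}$ occurring in some satisfying assignment, an outgoing edge labelled $\ell$ whose head is a leaf if $|Var(F)|=1$ and otherwise the root of a decision tree for $F|_\ell$. A solution counting decision tree additionally gives the edge leaving node $w$ with label $\ell$ the weight $|F|_{A_w\cup\{\ell\}}|/|F|_{A_w}|$, where $A_w$ is the set of literals labelling the root-$w$ path. A variable $y$ is forced to $1$ by $A_u$ if some neighbour $z$ of $y$ in $G$ has $\neg z\in A_u$. $N^u(y)$ is the set of neighbours $z$ of $y$ that do not occur in $A_u$ and are not forced to $1$ by $A_u$. *)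

theory Defs
  imports Complex_Main
begin

datatype 'a lit = Pos 'a | Neg 'a

fun lvar :: "'a lit \<Rightarrow> 'a" where
  "lvar (Pos x) = x" | "lvar (Neg x) = x"

definition litvars :: "'a lit set \<Rightarrow> 'a set" where
  "litvars S = lvar ` S"

definition is_assignment :: "'a set \<Rightarrow> 'a lit set \<Rightarrow> bool" where
  "is_assignment X S \<longleftrightarrow> litvars S \<subseteq> X \<and>
     (\<forall>x\<in>X. (Pos x \<in> S) \<noteq> (Neg x \<in> S))"

text \<open>A Boolean function: its variable set together with its set of
  satisfying assignments.\<close>
type_synonym 'a bfun = "'a set \<times> 'a lit set set"

definition Var :: "'a bfun \<Rightarrow> 'a set" where "Var F = fst F"
definition Sat :: "'a bfun \<Rightarrow> 'a lit set set" where "Sat F = snd F"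

definition restrict :: "'a bfun \<Rightarrow> 'a lit set \<Rightarrow> 'a bfun" where
  "restrict F S = (Var F - litvars S,
     {S'. is_assignment (Var F - litvars S) S' \<and> S \<union> S' \<in> Sat F})"

definition count :: "'a bfun \<Rightarrow> nat" where
  "count F = card (Sat F)"

definition simple_graph :: "'a set \<Rightarrow> 'a set set \<Rightarrow> bool" where
  "simple_graph V E \<longleftrightarrow> finite V \<and>
     (\<forall>e\<in>E. \<exists>u v. e = {u, v} \<and> u \<noteq> v \<and> u \<in> V \<and> v \<in> V)"

definition no_isolated :: "'a set \<Rightarrow> 'a set set \<Rightarrow> bool" where
  "no_isolated V E \<longleftrightarrow> (\<forall>v\<in>V. \<exists>e\<in>E. v \<in> e)"

definition phi :: "'a set \<Rightarrow> 'a set set \<Rightarrow> 'a bfun" where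
  "phi V E = (V, {S. is_assignment V S \<and> (\<forall>e\<in>E. \<exists>v\<in>e. Pos v \<in> S)})"

text \<open>Node x cp cn: node labelled by variable x; cp is the (optional) child
  along the edge labelled x, cn the (optional) child along the edge labelled
  \<not>x.  Leaf is a leaf.\<close>
datatype 'a dtree = Leaf | Node 'a "'a dtree option" "'a dtree option"

inductive is_dtree :: "'a bfun \<Rightarrow> 'a dtree \<Rightarrow> bool" where
  "\<lbrakk> Sat F \<noteq> {}; x \<in> Var F;
     cp \<noteq> None \<longleftrightarrow> (\<exists>S\<in>Sat F. Pos x \<in> S);
     cn \<noteq> None \<longleftrightarrow> (\<exists>S\<in>Sat F. Neg x \<in> S);
     \<forall>t. cp = Some t \<longrightarrow>
        (card (Var F) = 1 \<longrightarrow> t = Leaf) \<and>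
        (card (Var F) \<noteq> 1 \<longrightarrow> is_dtree (restrict F {Pos x}) t);
     \<forall>t. cn = Some t \<longrightarrow>
        (card (Var F) = 1 \<longrightarrow> t = Leaf) \<and>
        (card (Var F) \<noteq> 1 \<longrightarrow> is_dtree (restrict F {Neg x}) t) \<rbrakk>
   \<Longrightarrow> is_dtree F (Node x cp cn)"

text \<open>node_at T A w: w is (the subtree rooted at) a node of T reached from the
  root along a path whose edge labels form the literal set A (= A_w).\<close>
inductive node_at :: "'a dtree \<Rightarrow> 'a lit set \<Rightarrow> 'a dtree \<Rightarrow> bool" where
  root: "node_at T {} T"
| pos: "\<lbrakk> node_at T A (Node x cp cn); cp = Some t \<rbrakk> \<Longrightarrow> node_at T (A \<union> {Pos x}) t"
| neg: "\<lbrakk> node_at T A (Node x cp cn); cn = Some t \<rbrakk> \<Longrightarrow> node_at T (A \<union> {Neg x}) t"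

text \<open>Weight of the edge leaving a node w (with path literals A = A_w)
  labelled l, in the solution counting decision tree for F.\<close>
definition edge_weight :: "'a bfun \<Rightarrow> 'a lit set \<Rightarrow> 'a lit \<Rightarrow> real" where
  "edge_weight F A l = real (count (restrict F (A \<union> {l}))) / real (count (restrict F A))"

definition forced1 :: "'a set set \<Rightarrow> 'a lit set \<Rightarrow> 'a \<Rightarrow> bool" where
  "forced1 E A y \<longleftrightarrow> (\<exists>z. {y, z} \<in> E \<and> Neg z \<in> A)"

definition Nu :: "'a set set \<Rightarrow> 'a lit set \<Rightarrow> 'a \<Rightarrow> 'a set" where
  "Nu E A y = {z. {y, z} \<in> E \<and> z \<notin> litvars A \<and> \<not> forced1 E A z}"

end

theory Submission imports Defs begin

lemma litvars_simps[simp]: "litvars (A \<union> B) = litvars A \<union> litvars B"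
  "litvars (insert l B) = insert (lvar l) (litvars B)" "litvars {} = {}"
  by (auto simp: litvars_def)

lemma asg_var: "is_assignment W S \<Longrightarrow> l \<in> S \<Longrightarrow> lvar l \<in> W"
  unfolding is_assignment_def litvars_def by blast

lemma asg_insert:
  assumes "lvar l \<in> W" "is_assignment (W - {lvar l}) S"
  shows "is_assignment W (insert l S)"
proof -
  have vS: "\<forall>m\<in>S. lvar m \<in> W \<and> lvar m \<noteq> lvar l" using assms(2) unfolding is_assignment_def litvars_def by auto
  have c: "\<forall>y\<in>W - {lvar l}. (Pos y \<in> S) \<noteq> (Neg y \<in> S)" using assms(2) unfolding is_assignment_def by auto
  show ?thesis unfolding is_assignment_def litvars_def
  proof (intro conjI ballI)
    show "lvar ` insert l S \<subseteq> W" using vS assms(1) by auto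
    fix y assume y: "y \<in> W"
    show "(Pos y \<in> insert l S) \<noteq> (Neg y \<in> insert l S)"
    proof (cases "y = lvar l")
      case True then show ?thesis using vS by (cases l) force+
    next
      case False then show ?thesis using c y by (cases l) auto
    qed
  qed
qed

lemma asg_remove:
  assumes "is_assignment W S" "l \<in> S"
  shows "is_assignment (W - {lvar l}) (S - {l})"
proof -
  have vS: "\<forall>m\<in>S. lvar m \<in> W" using assms(1) unfolding is_assignment_def litvars_def by auto
  have c: "\<forall>y\<in>W. (Pos y \<in> S) \<noteq> (Neg y \<in> S)" using assms(1) unfolding is_assignment_def by auto
  have other: "m = l" if "m \<in> S" "lvar m = lvar l" for m
  proof -
    have lW: "lvar l \<in> W" using vS assms(2) by auto
    show ?thesis using c lW that assms(2) by (cases m; cases l) auto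
  qed
  show ?thesis unfolding is_assignment_def litvars_def
  proof (intro conjI ballI)
    show "lvar ` (S - {l}) \<subseteq> W - {lvar l}" using vS other by auto
    fix y assume y: "y \<in> W - {lvar l}"
    then have "Pos y \<noteq> l" "Neg y \<noteq> l" by auto
    then show "(Pos y \<in> S - {l}) \<noteq> (Neg y \<in> S - {l})" using c y by auto
  qed
qed

lemma asg_flip: "is_assignment W S \<Longrightarrow> Neg x \<in> S \<Longrightarrow> is_assignment W (insert (Pos x) (S - {Neg x}))"
  using asg_remove[of W S "Neg x"] asg_insert[of "Pos x" W] asg_var[of W S "Neg x"] by simp

lemma asg_xor: "is_assignment W S \<Longrightarrow> y \<in> W \<Longrightarrow> (Pos y \<in> S) \<noteq> (Neg y \<in> S)"
  unfolding is_assignment_def by blast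

lemma asg_eq: "is_assignment W S1 \<Longrightarrow> is_assignment W S2 \<Longrightarrow> \<forall>y\<in>W. (Pos y \<in> S1) = (Pos y \<in> S2) \<Longrightarrow> S1 = S2"
  unfolding is_assignment_def litvars_def image_subset_iff
  by (metis lit.exhaust lvar.simps subsetI subset_antisym)

lemma asg_A:
  assumes "is_assignment (V - litvars A) S1" "is_assignment (V - litvars A) S2"
   "is_assignment V (A \<union> S1)" shows "is_assignment V (A \<union> S2)"
proof -
  have v1: "\<forall>m\<in>S1. lvar m \<in> V \<and> lvar m \<notin> litvars A" "\<forall>m\<in>S2. lvar m \<in> V \<and> lvar m \<notin> litvars A"
    using assms(1,2) unfolding is_assignment_def litvars_def by auto
  have vA: "\<forall>m\<in>A. lvar m \<in> V" using assms(3) unfolding is_assignment_def litvars_def by auto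
  have c1: "\<forall>y\<in>V. (Pos y \<in> A \<union> S1) \<noteq> (Neg y \<in> A \<union> S1)" using assms(3) unfolding is_assignment_def by auto
  have c2: "\<forall>y\<in>V - litvars A. (Pos y \<in> S2) \<noteq> (Neg y \<in> S2)" using assms(2) unfolding is_assignment_def by auto
  show ?thesis unfolding is_assignment_def
  proof (intro conjI ballI)
    show "litvars (A \<union> S2) \<subseteq> V" using vA v1 unfolding litvars_def by auto
    fix y assume y: "y \<in> V"
    show "(Pos y \<in> A \<union> S2) \<noteq> (Neg y \<in> A \<union> S2)"
    proof (cases "y \<in> litvars A")
      case True
      then have "Pos y \<notin> S1" "Neg y \<notin> S1" "Pos y \<notin> S2" "Neg y \<notin> S2" using v1 by force+
      then show ?thesis using c1 y by auto
    next
      case False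
      then have "Pos y \<notin> A" "Neg y \<notin> A" unfolding litvars_def by force+
      then show ?thesis using c2 y False by auto
    qed
  qed
qed

lemma asg_g: "is_assignment W S \<Longrightarrow> x \<in> W \<Longrightarrow> M \<subseteq> W \<Longrightarrow> x \<notin> M \<Longrightarrow>
   is_assignment W (insert (Neg x) ((S - {Pos x} - Neg ` M) \<union> Pos ` M))"
  unfolding is_assignment_def litvars_def image_subset_iff
  by auto

lemma asg_finite: "finite W \<Longrightarrow> finite {S. is_assignment W S}"
proof -
  assume "finite W"
  have "S \<subseteq> Pos ` W \<union> Neg ` W" if "is_assignment W S" for S
  proof
    fix l assume "l \<in> S" then have "lvar l \<in> W" using asg_var that by blast
    then show "l \<in> Pos ` W \<union> Neg ` W" by (cases l) auto
  qed
  then have "{S. is_assignment W S} \<subseteq> Pow (Pos ` W \<union> Neg ` W)" by blast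
  then show ?thesis using \<open>finite W\<close> finite_subset by blast
qed

lemma restrict_restrict:
  assumes "lvar l \<in> Var (restrict F A)"
  shows "restrict (restrict F A) {l} = restrict F (A \<union> {l})"
proof -
  have v: "lvar l \<in> Var F - litvars A" using assms by (simp add: restrict_def Var_def)
  have "Var F - litvars A - {lvar l} = Var F - litvars (A \<union> {l})" by auto
  moreover have "\<And>S'. is_assignment (Var F - litvars A - {lvar l}) S' \<Longrightarrow>
      is_assignment (Var F - litvars A) ({l} \<union> S')"
    using asg_insert[of l "Var F - litvars A"] v by auto
  ultimately show ?thesis unfolding restrict_def Var_def Sat_def
    by (auto simp: Un_assoc Var_def)
qed

lemma count_restrict:
  assumes "lvar l \<in> Var G" "\<forall>S\<in>Sat G. is_assignment (Var G) S"
  shows "card (Sat (restrict G {l})) = card {S\<in>Sat G. l \<in> S}"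
proof (rule bij_betw_same_card[of "insert l"])
  have sat: "Sat (restrict G {l}) = {S'. is_assignment (Var G - {lvar l}) S' \<and> {l} \<union> S' \<in> Sat G}"
    by (simp add: restrict_def Sat_def Var_def)
  have nl: "l \<notin> S'" if "S' \<in> Sat (restrict G {l})" for S'
    using that asg_var[of "Var G - {lvar l}" S' l] unfolding sat by auto
  show "bij_betw (insert l) (Sat (restrict G {l})) {S \<in> Sat G. l \<in> S}"
    unfolding bij_betw_def
  proof
    show "inj_on (insert l) (Sat (restrict G {l}))"
      by (rule inj_onI) (metis nl insert_ident)
    show "insert l ` Sat (restrict G {l}) = {S \<in> Sat G. l \<in> S}"
    proof
      show "insert l ` Sat (restrict G {l}) \<subseteq> {S \<in> Sat G. l \<in> S}" unfolding sat by auto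
      show "{S \<in> Sat G. l \<in> S} \<subseteq> insert l ` Sat (restrict G {l})"
      proof
        fix S assume S: "S \<in> {S \<in> Sat G. l \<in> S}"
        then have "S - {l} \<in> Sat (restrict G {l})" unfolding sat
          using asg_remove[of "Var G" S l] assms(2) by (auto simp: insert_absorb)
        moreover have "S = insert l (S - {l})" using S by auto
        ultimately show "S \<in> insert l ` Sat (restrict G {l})" by blast
      qed
    qed
  qed
qed

inductive_cases dtE: "is_dtree F (Node x cp cn)"

lemma dt_inv: "is_dtree G (Node x cp cn) \<Longrightarrow> Sat G \<noteq> {} \<and> x \<in> Var G \<and> (cp \<noteq> None \<longleftrightarrow> (\<exists>S\<in>Sat G. Pos x \<in> S)) \<and> (cn \<noteq> None \<longleftrightarrow> (\<exists>S\<in>Sat G. Neg x \<in> S))"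
  by (erule dtE) blast

lemma restrict_phi_empty: "restrict (phi V E) {} = phi V E"
  unfolding restrict_def phi_def Var_def Sat_def by auto

lemma node_at_dtree:
  "node_at T A w \<Longrightarrow> is_dtree (phi V E) T \<Longrightarrow> w = Leaf \<or> is_dtree (restrict (phi V E) A) w"
proof (induction rule: node_at.induct)
  case (root T)
  then show ?case by (simp add: restrict_phi_empty)
next
  case (pos T A x cp cn t)
  then have d: "is_dtree (restrict (phi V E) A) (Node x cp cn)" by simp
  from d show ?case
  proof (cases rule: is_dtree.cases)
    case 1
    then show ?thesis using pos restrict_restrict[of "Pos x"] by auto
  qed
next
  case (neg T A x cp cn t)
  then have d: "is_dtree (restrict (phi V E) A) (Node x cp cn)" by simp
  from d show ?case
  proof (cases rule: is_dtree.cases)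
    case 1
    then show ?thesis using neg restrict_restrict[of "Neg x"] by auto
  qed
qed

lemma arith:
  fixes n p k :: nat
  assumes "n \<le> p" "p \<le> n * 2^k" "0 < p + n"
  shows "(1/2::real) ^ (k + 1) \<le> n / (p + n)" "n / (p + n) \<le> (1/2::real)"
    "1/2 \<le> p / (p + n::real)" "p / (p + n::real) \<le> 1 - (1/2) ^ (k + 1)"
proof -
  have pn: "real p + real n > 0" using assms(3) by linarith
  have a: "real p \<le> real n * 2^k" using assms(2) by (metis of_nat_le_iff of_nat_mult of_nat_numeral of_nat_power)
  have b: "real n \<le> real n * 2^k" using a assms(1) by linarith
  have c: "real p + real n \<le> real n * 2^(k+1)" using a b by simp
  have eq: "p / (p + n::real) = 1 - n / (p + n)" using pn by (simp add: field_simps)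
  show 1: "(1/2::real) ^ (k + 1) \<le> n / (p + n)"
    using c pn by (simp add: field_simps power_divide)
  show 2: "n / (p + n) \<le> (1/2::real)" using pn assms(1) by (simp add: field_simps)
  show "1/2 \<le> p / (p + n::real)" using 2 eq by linarith
  show "p / (p + n::real) \<le> 1 - (1/2) ^ (k + 1)" using 1 eq by linarith
qed


theorem lemma11:
  fixes V :: "'a set" and E :: "'a set set" and T :: "'a dtree"
    and A :: "'a lit set" and x :: 'a and cp cn :: "'a dtree option"
  assumes "simple_graph V E"
    and "no_isolated V E"
    and "is_dtree (phi V E) T"
    and "node_at T A (Node x cp cn)"
    and "\<not> forced1 E A x"
  shows "cp \<noteq> None \<and> cn \<noteq> None
    \<and> (1/2) ^ (card (Nu E A x) + 1) \<le> edge_weight (phi V E) A (Neg x)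
    \<and> edge_weight (phi V E) A (Neg x) \<le> 1/2
    \<and> 1/2 \<le> edge_weight (phi V E) A (Pos x)
    \<and> edge_weight (phi V E) A (Pos x) \<le> 1 - (1/2) ^ (card (Nu E A x) + 1)"
proof -
  define F where "F = phi V E"
  define G where "G = restrict F A"
  define W where "W = V - litvars A"
  define P where "P = {S\<in>Sat G. Pos x \<in> S}"
  define N where "N = {S\<in>Sat G. Neg x \<in> S}"
  define Nx where "Nx = Nu E A x"
  have finV: "finite V" using assms(1) unfolding simple_graph_def by blast
  have edge: "\<exists>u v. e = {u, v} \<and> u \<noteq> v \<and> u \<in> V \<and> v \<in> V" if "e \<in> E" for e
    using assms(1) that unfolding simple_graph_def by blast
  have VarG: "Var G = W" unfolding G_def F_def W_def restrict_def phi_def Var_def by simp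
  have SatG: "Sat G = {S'. is_assignment W S' \<and> is_assignment V (A \<union> S') \<and> (\<forall>e\<in>E. \<exists>v\<in>e. Pos v \<in> A \<union> S')}"
    unfolding G_def F_def W_def restrict_def phi_def Var_def Sat_def by auto
  have memN: "is_assignment W S \<and> is_assignment V (A \<union> S) \<and> (\<forall>e\<in>E. \<exists>v\<in>e. Pos v \<in> A \<union> S) \<and> Neg x \<in> S"
    if "S \<in> N" for S using that by (simp add: N_def SatG)
  have memP: "is_assignment W S \<and> is_assignment V (A \<union> S) \<and> (\<forall>e\<in>E. \<exists>v\<in>e. Pos v \<in> A \<union> S) \<and> Pos x \<in> S"
    if "S \<in> P" for S using that by (simp add: P_def SatG)
  have intN: "S \<in> N" if "is_assignment W S" "is_assignment V (A \<union> S)" "\<forall>e\<in>E. \<exists>v\<in>e. Pos v \<in> A \<union> S" "Neg x \<in> S" for S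
    using that by (simp add: N_def SatG)
  have intP: "S \<in> P" if "is_assignment W S" "is_assignment V (A \<union> S)" "\<forall>e\<in>E. \<exists>v\<in>e. Pos v \<in> A \<union> S" "Pos x \<in> S" for S
    using that by (simp add: P_def SatG)
  have "Node x cp cn = Leaf \<or> is_dtree G (Node x cp cn)"
    using node_at_dtree[OF assms(4) assms(3)] unfolding G_def F_def .
  then have d: "is_dtree G (Node x cp cn)" by simp
  have ne: "Sat G \<noteq> {}" and xW: "x \<in> W" and cpP: "cp \<noteq> None \<longleftrightarrow> P \<noteq> {}" and cnN: "cn \<noteq> None \<longleftrightarrow> N \<noteq> {}"
  proof -
    note i = dt_inv[OF d]
    show "Sat G \<noteq> {}" using i by blast
    show "x \<in> W" using i VarG by blast
    show "cp \<noteq> None \<longleftrightarrow> P \<noteq> {}" using i unfolding P_def by blast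
    show "cn \<noteq> None \<longleftrightarrow> N \<noteq> {}" using i unfolding N_def by blast
  qed
  have satW: "is_assignment W S" if "S \<in> Sat G" for S using that by (simp add: SatG)
  have asgG: "\<forall>S\<in>Sat G. is_assignment (Var G) S" using satW VarG by auto
  have finG: "finite (Sat G)"
  proof (rule finite_subset)
    show "Sat G \<subseteq> {S. is_assignment W S}" using satW by blast
    show "finite {S. is_assignment W S}" using asg_finite finV unfolding W_def by blast
  qed
  have finP: "finite P" "finite N" using finG unfolding P_def N_def by auto
  have PN: "Sat G = P \<union> N" "P \<inter> N = {}"
  proof -
    have "\<forall>S\<in>Sat G. (Pos x \<in> S) \<noteq> (Neg x \<in> S)"
    proof
      fix S assume "S \<in> Sat G"
      show "(Pos x \<in> S) \<noteq> (Neg x \<in> S)" using asg_xor[OF satW[OF \<open>S \<in> Sat G\<close>] xW] .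
    qed
    then show "Sat G = P \<union> N" "P \<inter> N = {}" unfolding P_def N_def by auto
  qed
  have cG: "count G = card P + card N" unfolding count_def using PN finP by (simp add: card_Un_disjoint)
  have xG: "lvar (Pos x) \<in> Var (restrict F A)" "lvar (Neg x) \<in> Var (restrict F A)"
    using xW VarG unfolding G_def by simp_all
  have cPos: "count (restrict F (A \<union> {Pos x})) = card P"
  proof -
    have "restrict F (A \<union> {Pos x}) = restrict G {Pos x}" unfolding G_def using restrict_restrict[OF xG(1)] by simp
    moreover have "card (Sat (restrict G {Pos x})) = card P" unfolding P_def
      using count_restrict[of "Pos x" G] xG(1) asgG unfolding G_def by simp
    ultimately show ?thesis unfolding count_def by simp
  qed
  have cNeg: "count (restrict F (A \<union> {Neg x})) = card N"
  proof -
    have "restrict F (A \<union> {Neg x}) = restrict G {Neg x}" unfolding G_def using restrict_restrict[OF xG(2)] by simp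
    moreover have "card (Sat (restrict G {Neg x})) = card N" unfolding N_def
      using count_restrict[of "Neg x" G] xG(2) asgG unfolding G_def by simp
    ultimately show ?thesis unfolding count_def by simp
  qed
  have NP: "card N \<le> card P"
  proof (rule card_inj_on_le[where f="\<lambda>S. insert (Pos x) (S - {Neg x})"])
    show "finite P" by (rule finP)
    show "inj_on (\<lambda>S. insert (Pos x) (S - {Neg x})) N"
    proof (rule inj_onI)
      fix S1 S2 assume s12: "S1 \<in> N" "S2 \<in> N" and eq: "insert (Pos x) (S1 - {Neg x}) = insert (Pos x) (S2 - {Neg x})"
      have a: "is_assignment W S1" "is_assignment W S2" "Neg x \<in> S1" "Neg x \<in> S2"
        using memN[OF s12(1)] memN[OF s12(2)] by blast+
      have "Pos x \<notin> S1" "Pos x \<notin> S2" using asg_xor[OF a(1) xW] asg_xor[OF a(2) xW] a(3,4) by simp_all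
      note n = this
      show "S1 = S2"
      proof (rule set_eqI)
        fix l
        show "(l \<in> S1) = (l \<in> S2)"
        proof (cases "l = Pos x \<or> l = Neg x")
          case True then show ?thesis using n a(3,4) by auto
        next
          case False then show ?thesis using eq[unfolded set_eq_iff, rule_format, of l] by simp
        qed
      qed
    qed
    show "(\<lambda>S. insert (Pos x) (S - {Neg x})) ` N \<subseteq> P"
    proof
      fix S' assume "S' \<in> (\<lambda>S. insert (Pos x) (S - {Neg x})) ` N"
      then obtain S where S: "S \<in> N" and S': "S' = insert (Pos x) (S - {Neg x})" by (rule imageE)
      have a: "is_assignment W S" "is_assignment V (A \<union> S)" "\<forall>e\<in>E. \<exists>v\<in>e. Pos v \<in> A \<union> S" "Neg x \<in> S"
        using memN[OF S] by blast+
      have b: "is_assignment W S'" using asg_flip[OF a(1) a(4)] S' by simp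
      have "is_assignment V (A \<union> S')" using asg_A[of V A S S'] a(1,2) b unfolding W_def by blast
      moreover have "\<forall>e\<in>E. \<exists>v\<in>e. Pos v \<in> A \<union> S'"
      proof
        fix e assume "e \<in> E"
        then obtain v where "v \<in> e" "Pos v \<in> A \<union> S" using a(3) by blast
        moreover have "Pos v \<in> A \<union> S'" using \<open>Pos v \<in> A \<union> S\<close> unfolding S' by auto
        ultimately show "\<exists>v\<in>e. Pos v \<in> A \<union> S'" by blast
      qed
      moreover have "Pos x \<in> S'" unfolding S' by simp
      ultimately show "S' \<in> P" using intP[OF b] by blast
    qed
  qed
  have xx: "z \<noteq> x" if E1: "{x, z} \<in> E" for z
  proof
    assume "z = x"
    obtain u v where uv: "{x, z} = {u, v}" "u \<noteq> v" using edge[OF E1] by blast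
    have "u \<in> {x, z}" "v \<in> {x, z}" using uv(1) by blast+
    then show False using \<open>z = x\<close> uv(2) by simp
  qed
  have inV: "z \<in> V" if E2: "{x', z} \<in> E" for x' z
  proof -
    obtain u v where uv: "{x', z} = {u, v}" "u \<in> V" "v \<in> V" using edge[OF E2] by blast
    have "z \<in> {u, v}" using uv(1) by blast
    then show ?thesis using uv by blast
  qed
  have NxW: "Nx \<subseteq> W" "x \<notin> Nx"
  proof -
    show "Nx \<subseteq> W"
    proof
      fix z assume "z \<in> Nx"
      then have "{x, z} \<in> E" "z \<notin> litvars A" unfolding Nx_def Nu_def by auto
      then show "z \<in> W" using inV[of x z] unfolding W_def by blast
    qed
    show "x \<notin> Nx" using xx[of x] unfolding Nx_def Nu_def by blast
  qed
  have finNx: "finite Nx" using NxW finV unfolding W_def by (meson finite_Diff rev_finite_subset)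
  define g where "g S = insert (Neg x) ((S - {Pos x} - Neg ` Nx) \<union> Pos ` Nx)" for S
  have PN2: "card P \<le> card N * 2 ^ card Nx"
  proof -
    have "card P \<le> card (N \<times> Pow Nx)"
    proof (rule card_inj_on_le[where f="\<lambda>S. (g S, {z\<in>Nx. Pos z \<in> S})"])
      show "finite (N \<times> Pow Nx)" using finP finNx by simp
      show "inj_on (\<lambda>S. (g S, {z\<in>Nx. Pos z \<in> S})) P"
      proof (rule inj_onI)
        fix S1 S2 assume s12: "S1 \<in> P" "S2 \<in> P" and eq: "(g S1, {z\<in>Nx. Pos z \<in> S1}) = (g S2, {z\<in>Nx. Pos z \<in> S2})"
        have a: "is_assignment W S1" "is_assignment W S2" "Pos x \<in> S1" "Pos x \<in> S2"
          using memP[OF s12(1)] memP[OF s12(2)] by blast+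
        show "S1 = S2"
        proof (rule asg_eq[OF a(1,2)], intro ballI)
          fix y assume "y \<in> W"
          show "(Pos y \<in> S1) = (Pos y \<in> S2)"
          proof (cases "y = x")
            case True then show ?thesis using a by simp
          next
            case False
            show ?thesis
            proof (cases "y \<in> Nx")
              case True
              have "{z\<in>Nx. Pos z \<in> S1} = {z\<in>Nx. Pos z \<in> S2}" using eq by simp
              then have "y \<in> {z\<in>Nx. Pos z \<in> S1} \<longleftrightarrow> y \<in> {z\<in>Nx. Pos z \<in> S2}" by simp
              then show ?thesis using True by simp
            next
              case nn: False
              have h: "Pos y \<in> S \<longleftrightarrow> Pos y \<in> g S" for S using False nn unfolding g_def by auto
              show ?thesis using eq h[of S1] h[of S2] by simp
            qed
          qed
        qed
      qed
      show "(\<lambda>S. (g S, {z\<in>Nx. Pos z \<in> S})) ` P \<subseteq> N \<times> Pow Nx"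
      proof
        fix q assume "q \<in> (\<lambda>S. (g S, {z\<in>Nx. Pos z \<in> S})) ` P"
        then obtain S where S: "S \<in> P" and q: "q = (g S, {z\<in>Nx. Pos z \<in> S})" by blast
        have a: "is_assignment W S" "is_assignment V (A \<union> S)" "\<forall>e\<in>E. \<exists>v\<in>e. Pos v \<in> A \<union> S" "Pos x \<in> S"
          using memP[OF S] by blast+
        have b: "is_assignment W (g S)" unfolding g_def using asg_g[OF a(1) xW NxW] .
        have c: "is_assignment V (A \<union> g S)" using asg_A[of V A S "g S"] a(1,2) b unfolding W_def by blast
        have e: "\<exists>v\<in>e. Pos v \<in> A \<union> g S" if eE: "e \<in> E" for e
        proof (cases "x \<in> e")
          case False
          then obtain v where "v \<in> e" "Pos v \<in> A \<union> S" using a(3) eE by blast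
          then show ?thesis using False unfolding g_def by auto
        next
          case True
          obtain u v where uv: "e = {u, v}" using edge[OF eE] by blast
          obtain z where ez: "e = {x, z}"
          proof (cases "x = u")
            case True then show ?thesis using that uv by blast
          next
            case False then have "x = v" using \<open>x \<in> e\<close> uv by blast
            then show ?thesis using that[of u] uv by (simp add: insert_commute)
          qed
          have zE: "{x, z} \<in> E" using eE ez by simp
          have zx: "z \<noteq> x" using xx zE .
          have "Pos z \<in> A \<union> g S"
          proof (cases "z \<in> litvars A")
            case True
            then obtain l where l: "l \<in> A" "lvar l = z" unfolding litvars_def by blast
            have "l \<noteq> Neg z" using assms(5) zE l unfolding forced1_def by blast
            then have "l = Pos z" using l by (cases l) auto
            then show ?thesis using l by simp
          next
            case zA: False
            show ?thesis
            proof (cases "forced1 E A z")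
              case True
              then obtain w where w: "{z, w} \<in> E" "Neg w \<in> A" unfolding forced1_def by blast
              have wV: "w \<in> V" using inV[OF w(1)] .
              have "Pos w \<notin> A \<union> S" using asg_xor[OF a(2) wV] w(2) by blast
              then have "Pos z \<in> A \<union> S" using a(3) w(1) by auto
              then have "Pos z \<in> S" using zA unfolding litvars_def by force
              then show ?thesis using zx unfolding g_def by auto
            next
              case False
              then have "z \<in> Nx" using zE zA unfolding Nx_def Nu_def by auto
              then show ?thesis unfolding g_def by auto
            qed
          qed
          then show ?thesis using ez by auto
        qed
        have "Neg x \<in> g S" unfolding g_def by blast
        then have "g S \<in> N" using intN b c e by blast
        then show "q \<in> N \<times> Pow Nx" using q by auto
      qed
    qed
    then show ?thesis using finP finNx by (simp add: card_cartesian_product card_Pow)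
  qed
  have pos: "0 < card P + card N" using ne PN finP by auto
  have ar: "(1/2::real) ^ (card Nx + 1) \<le> card N / (card P + card N)" "card N / (card P + card N) \<le> (1/2::real)"
    "1/2 \<le> card P / (card P + card N::real)" "card P / (card P + card N::real) \<le> 1 - (1/2) ^ (card Nx + 1)"
    using arith[OF NP PN2 pos] by auto
  have Pne: "P \<noteq> {}" using NP pos finP by auto
  have Nne: "N \<noteq> {}" using PN2 Pne finP by auto
  have w1: "edge_weight (phi V E) A (Neg x) = card N / (card P + card N)"
    unfolding edge_weight_def using cNeg cG unfolding F_def G_def by simp
  have w2: "edge_weight (phi V E) A (Pos x) = card P / (card P + card N)"
    unfolding edge_weight_def using cPos cG unfolding F_def G_def by simp
  show ?thesis using ar w1 w2 cpP cnN Pne Nne unfolding Nx_def by simp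
qed

end
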